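(* Consider the linear model $Y=X\beta^0+\epsilon$ with $Y\in\mathbb{R}^n$, $X\in\mathbb{R}^{n\times p}$, $\beta^0\in\mathbb{R}^p$, and noise vector $\epsilon\in\mathbb{R}^n$ with i.i.d. entries of mean $0$ and variance $\sigma^2$. Let $\Omega$ be a norm on $\mathbb{R}^p$ with dual norm $\Omega^*$, let $\lambda>0$, let $\hat\beta$ be a minimizer of $\beta\mapsto\|Y-X\beta\|_n+\lambda\Omega(\beta)$ and $\hat\epsilon:=Y-X\hat\beta$. Define $$f:=\frac{\lambda\Omega(\beta^0)}{\|\epsilon\|_n},\qquad \lambda^0:=\frac{\Omega^*(\epsilon^TX)}{n\|\epsilon\|_n}.$$ Suppose that (Assumption I) both $$P\Big(Y\in\big\{\tilde Y:\ \min_{\beta:\,X\beta=\tilde Y}\Omega(\beta)\le\|\epsilon\|_n\big\}\Big)=0\quad\text{and}\quad \frac{\lambda^0}{\lambda}(1+2f)<1$$ hold. Then $$1+f\ \ge\ \frac{\|\hat\epsilon\|_n}{\|\epsilon\|_n}\ \ge\ \frac{1-\frac{\lambda^0}{\lambda}(1+2f)}{f+2}\ >0.$$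
   Context: For $a\in\mathbb{R}^n$, $\|a\|_n:=\big(\sum_{j=1}^n a_j^2/n\big)^{1/2}$. The dual norm is $\Omega^*(x):=\max_{z:\,\Omega(z)\le 1} z^Tx$ for $x\in\mathbb{R}^p$; $\epsilon^TX$ is regarded as a vector in $\mathbb{R}^p$. *)

theory Defs
  imports "HOL-Probability.Probability"
begin

definition norm_n :: "real ^ 'n \<Rightarrow> real" where
  "norm_n a = sqrt ((\<Sum>j\<in>UNIV. (a $ j)^2) / real CARD('n))"

definition is_norm :: "(real ^ 'p \<Rightarrow> real) \<Rightarrow> bool" where
  "is_norm \<Omega> \<longleftrightarrow>
     (\<forall>x. \<Omega> x = 0 \<longrightarrow> x = 0) \<and>
     (\<forall>c x. \<Omega> (c *\<^sub>R x) = \<bar>c\<bar> * \<Omega> x) \<and>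
     (\<forall>x y. \<Omega> (x + y) \<le> \<Omega> x + \<Omega> y)"

text \<open>Dual norm  Omega*(x) = max_{Omega(z) <= 1} z^T x (the max is attained, so Sup = max).\<close>
definition dual_norm :: "(real ^ 'p \<Rightarrow> real) \<Rightarrow> real ^ 'p \<Rightarrow> real" where
  "dual_norm \<Omega> x = Sup {z \<bullet> x | z. \<Omega> z \<le> 1}"

end

theory Submission
  imports Defs
begin


lemma isn_basic:
  assumes "is_norm \<Omega>"
  shows "\<Omega> 0 = 0" "\<Omega> (-x) = \<Omega> x" "\<Omega> x \<ge> 0" "\<Omega> (x - y) \<le> \<Omega> x + \<Omega> y"
    "\<Omega> (x + y) \<le> \<Omega> x + \<Omega> y" "\<Omega> (c *\<^sub>R x) = \<bar>c\<bar> * \<Omega> x"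
proof -
  have h: "\<And>c x. \<Omega> (c *\<^sub>R x) = \<bar>c\<bar> * \<Omega> x" and t: "\<And>x y. \<Omega> (x + y) \<le> \<Omega> x + \<Omega> y"
    using assms unfolding is_norm_def by auto
  show z: "\<Omega> 0 = 0" using h[of 0 0] by simp
  show n: "\<Omega> (-x) = \<Omega> x" for x using h[of "-1" x] by simp
  show "\<Omega> x \<ge> 0" using t[of x "-x"] z n[of x] by simp
  show "\<Omega> (x - y) \<le> \<Omega> x + \<Omega> y" using t[of x "-y"] n[of y] by simp
  show "\<Omega> (x + y) \<le> \<Omega> x + \<Omega> y" by (rule t)
  show "\<Omega> (c *\<^sub>R x) = \<bar>c\<bar> * \<Omega> x" by (rule h)
qed

lemma isn_sum:
  assumes "is_norm \<Omega>" "finite S"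
  shows "\<Omega> (sum f S) \<le> (\<Sum>i\<in>S. \<Omega> (f i))"
  using assms(2)
proof (induction S rule: finite_induct)
  case empty then show ?case using isn_basic[OF assms(1)] by simp
next
  case (insert x F)
  then show ?case using isn_basic(5)[OF assms(1), of "f x" "sum f F"] by simp
qed

lemma isn_upper:
  fixes \<Omega> :: "real ^ 'p \<Rightarrow> real"
  assumes "is_norm \<Omega>"
  shows "\<Omega> x \<le> (\<Sum>i\<in>UNIV. \<Omega> (axis i 1)) * norm x"
proof -
  have "\<Omega> x = \<Omega> (\<Sum>i\<in>UNIV. (x$i) *\<^sub>R axis i 1)"
    using basis_expansion[of x] by (simp add: scalar_mult_eq_scaleR)
  also have "\<dots> \<le> (\<Sum>i\<in>UNIV. \<Omega> ((x$i) *\<^sub>R axis i 1))" by (rule isn_sum[OF assms]) simp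
  also have "\<dots> = (\<Sum>i\<in>UNIV. \<bar>x$i\<bar> * \<Omega> (axis i 1))" using isn_basic(6)[OF assms] by simp
  also have "\<dots> \<le> (\<Sum>i\<in>UNIV. norm x * \<Omega> (axis i 1))"
    by (intro sum_mono mult_right_mono component_le_norm_cart isn_basic(3)[OF assms])
  finally show ?thesis by (simp add: sum_distrib_left mult.commute)
qed

lemma isn_cont:
  fixes \<Omega> :: "real ^ 'p \<Rightarrow> real"
  assumes "is_norm \<Omega>"
  shows "continuous_on S \<Omega>"
proof -
  define C where "C = (\<Sum>i\<in>UNIV. \<Omega> (axis i (1::real))) + 1"
  have C: "C > 0" unfolding C_def using isn_basic(3)[OF assms]
    by (smt (verit) sum_nonneg)
  have L: "\<bar>\<Omega> x - \<Omega> y\<bar> \<le> C * norm (x - y)" for x y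
  proof -
    have "\<Omega> x \<le> \<Omega> (x - y) + \<Omega> y" using isn_basic(5)[OF assms, of "x-y" y] by simp
    moreover have "\<Omega> y \<le> \<Omega> (x - y) + \<Omega> x" using isn_basic(5)[OF assms, of "y-x" x] isn_basic(2)[OF assms, of "x-y"] by simp
    moreover have "\<Omega> (x - y) \<le> C * norm (x - y)" using isn_upper[OF assms, of "x-y"] unfolding C_def
      by (smt (verit) norm_ge_zero mult_right_mono distrib_right mult_1)
    ultimately show ?thesis by linarith
  qed
  show ?thesis unfolding continuous_on_iff
  proof (intro ballI allI impI)
    fix x e assume "x \<in> S" "(0::real) < e"
    then show "\<exists>d>0. \<forall>x'\<in>S. dist x' x < d \<longrightarrow> dist (\<Omega> x') (\<Omega> x) < e"
      using C L by (intro exI[of _ "e / C"]) (auto simp: dist_norm field_simps intro: le_less_trans)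
  qed
qed

lemma isn_lower:
  fixes \<Omega> :: "real ^ 'p \<Rightarrow> real"
  assumes "is_norm \<Omega>"
  shows "\<exists>m>0. \<forall>x. m * norm x \<le> \<Omega> x"
proof -
  obtain i :: 'p where True by simp
  have ne: "sphere (0::real^'p) 1 \<noteq> {}" using norm_axis_1[of i] unfolding sphere_def by (metis (mono_tags) dist_0_norm mem_Collect_eq empty_iff)
  obtain z where z: "z \<in> sphere 0 1" and zm: "\<forall>y\<in>sphere 0 1. \<Omega> z \<le> \<Omega> y"
    using continuous_attains_inf[OF compact_sphere ne isn_cont[OF assms]] by blast
  have "z \<noteq> 0" using z by auto
  then have "\<Omega> z \<noteq> 0" using assms unfolding is_norm_def by auto
  then have zp: "\<Omega> z > 0" using isn_basic(3)[OF assms, of z] by simp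
  have "\<Omega> z * norm x \<le> \<Omega> x" for x
  proof (cases "x = 0")
    case True then show ?thesis using isn_basic(1)[OF assms] by simp
  next
    case False
    then have "(1 / norm x) *\<^sub>R x \<in> sphere 0 1" by auto
    then have "\<Omega> z \<le> \<Omega> ((1 / norm x) *\<^sub>R x)" using zm by blast
    also have "\<dots> = \<Omega> x / norm x" using isn_basic(6)[OF assms] by simp
    finally show ?thesis using False by (simp add: field_simps)
  qed
  then show ?thesis using zp by blast
qed

lemma dual_props:
  fixes \<Omega> :: "real ^ 'p \<Rightarrow> real"
  assumes "is_norm \<Omega>"
  shows "dual_norm \<Omega> x \<ge> 0" "z \<bullet> x \<le> \<Omega> z * dual_norm \<Omega> x"
proof -
  obtain m where m: "m > 0" "\<And>x. m * norm x \<le> \<Omega> x" using isn_lower[OF assms] by blast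
  have bdd: "bdd_above {z \<bullet> x | z. \<Omega> z \<le> 1}"
  proof (rule bdd_aboveI)
    fix y assume "y \<in> {z \<bullet> x | z. \<Omega> z \<le> 1}"
    then obtain z where y: "y = z \<bullet> x" "\<Omega> z \<le> 1" by auto
    have "norm z \<le> 1 / m" using m(2)[of z] y(2) m(1) by (simp add: field_simps)
    then have "y \<le> 1 / m * norm x" using y(1) Cauchy_Schwarz_ineq2[of z x]
      by (smt (verit) mult_right_mono norm_ge_zero abs_le_iff)
    then show "y \<le> 1 / m * norm x" .
  qed
  have mem: "w \<bullet> x \<le> dual_norm \<Omega> x" if "\<Omega> w \<le> 1" for w
    unfolding dual_norm_def using that by (intro cSup_upper[OF _ bdd]) auto
  show d0: "dual_norm \<Omega> x \<ge> 0" using mem[of 0] isn_basic(1)[OF assms] by simp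
  show "z \<bullet> x \<le> \<Omega> z * dual_norm \<Omega> x"
  proof (cases "\<Omega> z = 0")
    case True
    then have "z = 0" using assms unfolding is_norm_def by auto
    then show ?thesis using d0 isn_basic(1)[OF assms] by simp
  next
    case False
    then have p: "\<Omega> z > 0" using isn_basic(3)[OF assms, of z] by simp
    have "\<Omega> ((1 / \<Omega> z) *\<^sub>R z) = 1" using isn_basic(6)[OF assms] p by simp
    then have "((1 / \<Omega> z) *\<^sub>R z) \<bullet> x \<le> dual_norm \<Omega> x" by (intro mem) simp
    then have "z \<bullet> x / \<Omega> z \<le> dual_norm \<Omega> x" by simp
    then show ?thesis using p by (simp add: divide_le_eq mult.commute)
  qed
qed

lemma norm_n_eq: "norm_n (a :: real ^ 'n) = norm a / sqrt (real CARD('n))"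
  unfolding norm_n_def norm_eq_sqrt_inner inner_vec_def
  by (simp add: power2_eq_square real_sqrt_divide)

lemma algebra_part:
  fixes E R B H l a :: real
  assumes E: "E > 0" and R: "R \<ge> 0" and B: "B \<ge> 0" and H: "H \<ge> 0" and l: "l > 0" and a: "a \<ge> 0"
    and min: "R + l * H \<le> E + l * B"
    and low: "R \<ge> E - a * (H + B)"
    and cond: "a / l * (1 + 2 * (l * B / E)) < 1"
  shows "1 + l * B / E \<ge> R / E \<and> R / E \<ge> (1 - a / l * (1 + 2 * (l * B / E))) / (l * B / E + 2)
     \<and> (1 - a / l * (1 + 2 * (l * B / E))) / (l * B / E + 2) > 0"
proof -
  define f where "f = l * B / E"
  define \<alpha> where "\<alpha> = a / l"
  define r where "r = R / E"
  have f0: "f \<ge> 0" unfolding f_def using E B l by simp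
  have al0: "\<alpha> \<ge> 0" unfolding \<alpha>_def using a l by simp
  have lB: "l * B = f * E" unfolding f_def using E by simp
  have aeq: "a = \<alpha> * l" unfolding \<alpha>_def using l by simp
  have c: "\<alpha> * (1 + 2 * f) < 1" using cond unfolding f_def \<alpha>_def .
  have "l * H \<le> E + l * B - R" using min by linarith
  then have "\<alpha> * (l * H) \<le> \<alpha> * (E + l * B - R)" using al0 by (rule mult_left_mono)
  then have "a * H \<le> \<alpha> * (E + l * B - R)" unfolding aeq by (simp add: mult.assoc)
  moreover have "a * B = \<alpha> * (l * B)" unfolding aeq by (simp add: mult.assoc)
  moreover have "\<alpha> * (E + 2 * (l * B) - R) = \<alpha> * (E + l * B - R) + \<alpha> * (l * B)" by (simp add: algebra_simps)
  moreover have "a * (H + B) = a * H + a * B" by (simp add: algebra_simps)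
  ultimately have "R \<ge> E - \<alpha> * (E + 2 * (l * B) - R)" using low by linarith
  then have "R \<ge> E - \<alpha> * (E + 2 * (f * E) - R)" unfolding lB .
  moreover have "\<alpha> * (E + 2 * (f * E) - R) = E * (\<alpha> * (1 + 2 * f)) - R * \<alpha>" by (simp add: algebra_simps)
  ultimately have "R - R * \<alpha> \<ge> E - E * (\<alpha> * (1 + 2 * f))" by linarith
  moreover have "R - R * \<alpha> \<le> R" using R al0 by simp
  ultimately have "E - E * (\<alpha> * (1 + 2 * f)) \<le> R" by linarith
  then have "E * (1 - \<alpha> * (1 + 2 * f)) \<le> R" by (simp add: right_diff_distrib)
  then have "(E * (1 - \<alpha> * (1 + 2 * f))) / E \<le> R / E" using E by (intro divide_right_mono) simp_all
  then have r1: "r \<ge> 1 - \<alpha> * (1 + 2 * f)" unfolding r_def using E by simp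
  have pos: "1 - \<alpha> * (1 + 2 * f) > 0" using c by simp
  have "(1 - \<alpha> * (1 + 2 * f)) / (f + 2) \<le> 1 - \<alpha> * (1 + 2 * f)"
    using pos f0 by (simp add: divide_le_eq)
  moreover have "l * H \<ge> 0" using l H by simp
  then have "R \<le> E + l * B" using min by linarith
  then have "R / E \<le> (E + l * B) / E" using E by (intro divide_right_mono) simp_all
  then have "r \<le> 1 + f" unfolding r_def f_def using E by (simp add: add_divide_distrib)
  moreover have "(1 - \<alpha> * (1 + 2 * f)) / (f + 2) > 0" using pos f0 by simp
  ultimately show ?thesis using r1 unfolding r_def[symmetric] f_def[symmetric] \<alpha>_def[symmetric] by linarith
qed

lemma pointwise:
  fixes X :: "real ^ 'p ^ 'n" and e :: "real ^ 'n"
  assumes norm: "is_norm \<Omega>" and lampos: "lam > 0"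
    and min: "norm_n (X *v beta0 + e - X *v bh) + lam * \<Omega> bh \<le> norm_n (X *v beta0 + e - X *v beta0) + lam * \<Omega> beta0"
  shows "(let f = lam * \<Omega> beta0 / norm_n e;
          lam0 = dual_norm \<Omega> (e v* X) / (real CARD('n) * norm_n e);
          epshat = X *v beta0 + e - X *v bh
      in (norm_n e > 0 \<and> lam0 / lam * (1 + 2 * f) < 1) \<longrightarrow>
         1 + f \<ge> norm_n epshat / norm_n e \<and>
         norm_n epshat / norm_n e \<ge> (1 - lam0 / lam * (1 + 2 * f)) / (f + 2) \<and>
         (1 - lam0 / lam * (1 + 2 * f)) / (f + 2) > 0)"
  unfolding Let_def
proof (intro impI)
  assume A: "0 < norm_n e \<and> dual_norm \<Omega> (e v* X) / (real CARD('n) * norm_n e) / lam * (1 + 2 * (lam * \<Omega> beta0 / norm_n e)) < 1"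
  define eh where "eh = X *v beta0 + e - X *v bh"
  define d where "d = bh - beta0"
  define D where "D = dual_norm \<Omega> (e v* X)"
  define s where "s = sqrt (real CARD('n))"
  have s: "s > 0" unfolding s_def by simp
  have ehd: "eh = e - X *v d" unfolding eh_def d_def by (simp add: matrix_vector_mult_diff_distrib)
  have A1: "norm_n e > 0" using A by (rule conjunct1)
  have "norm e / s > 0" using A1 unfolding norm_n_eq s_def[symmetric] .
  then have ne: "norm e > 0" using s by (simp add: zero_less_divide_iff)
  have "e \<bullet> eh = norm e ^ 2 - (e v* X) \<bullet> d" unfolding ehd dot_lmul_matrix
    by (simp add: inner_diff_right power2_norm_eq_inner)
  moreover have "(e v* X) \<bullet> d \<le> \<Omega> d * D" unfolding D_def using dual_props(2)[OF norm] by (simp add: inner_commute)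
  moreover have "e \<bullet> eh \<le> norm e * norm eh" by (rule norm_cauchy_schwarz)
  ultimately have "norm e * norm eh \<ge> norm e * norm e - \<Omega> d * D" by (simp add: power2_eq_square)
  then have "norm eh \<ge> norm e - \<Omega> d * D / norm e" using ne by (simp add: field_simps)
  then have low0: "norm_n eh \<ge> norm_n e - \<Omega> d * (D / (real CARD('n) * norm_n e))"
  proof -
    have N: "real CARD('n) = s * s" unfolding s_def by simp
    have eq: "\<Omega> d * (D / (real CARD('n) * (norm e / s))) = (\<Omega> d * D / norm e) / s"
      unfolding N using s ne by (simp add: field_simps)
    have "norm eh / s \<ge> (norm e - \<Omega> d * D / norm e) / s"
      using \<open>norm eh \<ge> norm e - \<Omega> d * D / norm e\<close> s by (simp add: divide_right_mono)
    then show ?thesis unfolding norm_n_eq s_def[symmetric] eq by (simp add: diff_divide_distrib)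
  qed
  have D0: "D \<ge> 0" unfolding D_def using dual_props(1)[OF norm] .
  have a0: "D / (real CARD('n) * norm_n e) \<ge> 0" using D0 A1 by (intro divide_nonneg_nonneg) simp_all
  have "\<Omega> d \<le> \<Omega> bh + \<Omega> beta0" unfolding d_def by (rule isn_basic(4)[OF norm])
  then have low: "norm_n eh \<ge> norm_n e - D / (real CARD('n) * norm_n e) * (\<Omega> bh + \<Omega> beta0)"
  proof -
    have "\<Omega> d * (D / (real CARD('n) * norm_n e)) \<le> (\<Omega> bh + \<Omega> beta0) * (D / (real CARD('n) * norm_n e))"
      using \<open>\<Omega> d \<le> \<Omega> bh + \<Omega> beta0\<close> a0 by (rule mult_right_mono)
    then show ?thesis using low0 by (simp add: mult.commute)
  qed
  have R0: "norm_n eh \<ge> 0" unfolding norm_n_eq by simp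
  have mm: "norm_n eh + lam * \<Omega> bh \<le> norm_n e + lam * \<Omega> beta0" using min unfolding eh_def by simp
  show "1 + lam * \<Omega> beta0 / norm_n e \<ge> norm_n (X *v beta0 + e - X *v bh) / norm_n e \<and>
         norm_n (X *v beta0 + e - X *v bh) / norm_n e \<ge> (1 - dual_norm \<Omega> (e v* X) / (real CARD('n) * norm_n e) / lam * (1 + 2 * (lam * \<Omega> beta0 / norm_n e))) / (lam * \<Omega> beta0 / norm_n e + 2) \<and>
         (1 - dual_norm \<Omega> (e v* X) / (real CARD('n) * norm_n e) / lam * (1 + 2 * (lam * \<Omega> beta0 / norm_n e))) / (lam * \<Omega> beta0 / norm_n e + 2) > 0"
    using algebra_part[OF conjunct1[OF A] R0 isn_basic(3)[OF norm] isn_basic(3)[OF norm] lampos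
      a0[unfolded D_def] mm low[unfolded D_def] conjunct2[OF A]]
    unfolding eh_def .
qed

theorem lemma4:
  fixes M :: "'a measure"
    and X :: "real ^ 'p ^ 'n"
    and beta0 :: "real ^ 'p"
    and \<epsilon> :: "'a \<Rightarrow> real ^ 'n"
    and Y :: "'a \<Rightarrow> real ^ 'n"
    and \<Omega> :: "real ^ 'p \<Rightarrow> real"
    and lam \<sigma> :: real
    and betahat :: "'a \<Rightarrow> real ^ 'p"
  assumes prob: "prob_space M"
    and eps_rv: "\<And>i. (\<lambda>\<omega>. \<epsilon> \<omega> $ i) \<in> borel_measurable M"
    and eps_indep: "prob_space.indep_vars M (\<lambda>i. borel) (\<lambda>i \<omega>. \<epsilon> \<omega> $ i) UNIV"
    and eps_ident: "\<And>i j. distr M borel (\<lambda>\<omega>. \<epsilon> \<omega> $ i) = distr M borel (\<lambda>\<omega>. \<epsilon> \<omega> $ j)"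
    and eps_integrable: "\<And>i. integrable M (\<lambda>\<omega>. (\<epsilon> \<omega> $ i)^2)"
    and eps_mean: "\<And>i. prob_space.expectation M (\<lambda>\<omega>. \<epsilon> \<omega> $ i) = 0"
    and eps_var: "\<And>i. prob_space.variance M (\<lambda>\<omega>. \<epsilon> \<omega> $ i) = \<sigma>^2"
    and model: "\<And>\<omega>. Y \<omega> = X *v beta0 + \<epsilon> \<omega>"
    and norm: "is_norm \<Omega>"
    and lampos: "lam > 0"
    and minimizer: "\<And>\<omega> \<beta>. norm_n (Y \<omega> - X *v betahat \<omega>) + lam * \<Omega> (betahat \<omega>)
                         \<le> norm_n (Y \<omega> - X *v \<beta>) + lam * \<Omega> \<beta>"
    and assumptionI: "AE \<omega> in M. \<not> (\<exists>\<beta>. X *v \<beta> = Y \<omega> \<and> \<Omega> \<beta> \<le> norm_n (\<epsilon> \<omega>))"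
  shows "AE \<omega> in M.
     (let f = lam * \<Omega> beta0 / norm_n (\<epsilon> \<omega>);
          lam0 = dual_norm \<Omega> (\<epsilon> \<omega> v* X) / (real CARD('n) * norm_n (\<epsilon> \<omega>));
          epshat = Y \<omega> - X *v betahat \<omega>
      in (norm_n (\<epsilon> \<omega>) > 0 \<and> lam0 / lam * (1 + 2 * f) < 1) \<longrightarrow>
         1 + f \<ge> norm_n epshat / norm_n (\<epsilon> \<omega>) \<and>
         norm_n epshat / norm_n (\<epsilon> \<omega>) \<ge> (1 - lam0 / lam * (1 + 2 * f)) / (f + 2) \<and>
         (1 - lam0 / lam * (1 + 2 * f)) / (f + 2) > 0)"
proof -
  show ?thesis
  proof (rule AE_I2[of M])
    fix \<omega>
    show "let f = lam * \<Omega> beta0 / norm_n (\<epsilon> \<omega>);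
          lam0 = dual_norm \<Omega> (\<epsilon> \<omega> v* X) / (real CARD('n) * norm_n (\<epsilon> \<omega>));
          epshat = Y \<omega> - X *v betahat \<omega>
      in (norm_n (\<epsilon> \<omega>) > 0 \<and> lam0 / lam * (1 + 2 * f) < 1) \<longrightarrow>
         1 + f \<ge> norm_n epshat / norm_n (\<epsilon> \<omega>) \<and>
         norm_n epshat / norm_n (\<epsilon> \<omega>) \<ge> (1 - lam0 / lam * (1 + 2 * f)) / (f + 2) \<and>
         (1 - lam0 / lam * (1 + 2 * f)) / (f + 2) > 0"
      unfolding model[of \<omega>]
      proof (rule pointwise[OF norm lampos])
        have "norm_n (Y \<omega> - X *v betahat \<omega>) + lam * \<Omega> (betahat \<omega>) \<le> norm_n (Y \<omega> - X *v beta0) + lam * \<Omega> beta0"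
          by (rule minimizer)
        then show "norm_n (X *v beta0 + \<epsilon> \<omega> - X *v betahat \<omega>) + lam * \<Omega> (betahat \<omega>)
          \<le> norm_n (X *v beta0 + \<epsilon> \<omega> - X *v beta0) + lam * \<Omega> beta0"
          unfolding model[of \<omega>] .
      qed
  qed
qed

end
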